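(* Let $\mathcal{U}$ be an age, let $\mathcal{C}\subseteq\mathcal{U}$ be a Fraïssé class whose Fraïssé limit is locally finite and has an oligomorphic automorphism group, let $\mathbf{T}\in\overline{\mathcal{U}}$, and let $u:\mathbf{V}\to\mathbf{T}$ be a universal homogeneous homomorphism to $\mathbf{T}$ within $\overline{\mathcal{C}}$. If $\operatorname{Aut}(\mathbf{T})$ is oligomorphic, then $\operatorname{Aut}(\mathbf{V})$ is oligomorphic.
   Context: An embedding is an injective homomorphism reflecting all relations. An age is a class of finitely generated structures of one signature with countably many isomorphism types, closed under finitely generated substructures (up to isomorphism) and with the joint embedding property; for an age $\mathcal{C}$, $\overline{\mathcal{C}}$ is the class of countable structures all of whose finitely generated substructures are isomorphic to members of $\mathcal{C}$. A Fraïssé class is an age with the amalgamation property, and its Fraïssé limit is the unique countable homogeneous structure (every isomorphism between finitely generated substructures extends to an automorphism) with that age. A structure is locally finite if all finitely generated substructures are finite. A permutation group on $\Omega$ is oligomorphic if for every $n\ge1$ its coordinatewise action on $\Omega^n$ has finitely many orbits. For $\mathbf{V}\in\overline{\mathcal{C}}$ and a countable $\mathbf{T}$, a homomorphism $u:\mathbf{V}\to\mathbf{T}$ is universal within $\overline{\mathcal{C}}$ if for every $\mathbf{A}\in\overline{\mathcal{C}}$ and homomorphism $h:\mathbf{A}\to\mathbf{T}$ there is an embedding $\iota:\mathbf{A}\hookrightarrow\mathbf{V}$ with $h=u\circ\iota$; homogeneous if for every finitely generated $\mathbf{A}\le\mathbf{V}$ and embedding $\iota:\mathbf{A}\hookrightarrow\mathbf{V}$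 with $u\circ\iota=u\restriction_A$ there is an automorphism $\alpha$ of $\mathbf{V}$ with $u\circ\alpha=u$ and $\alpha\restriction_A=\iota$. *)

theory Defs
  imports Main "HOL-Library.Countable_Set"
begin

record ('r, 'f) signature =
  rar :: "'r \<Rightarrow> nat"
  far :: "'f \<Rightarrow> nat"

(* A structure with carrier a subset of nat (so every structure considered is countable;
   classes of structures are handled up to isomorphism). Only the values of rel/fn on
   tuples from the universe of the right arity matter. *)
record ('r, 'f) struc =
  univ :: "nat set"
  rel :: "'r \<Rightarrow> nat list \<Rightarrow> bool"
  fn :: "'f \<Rightarrow> nat list \<Rightarrow> nat"

definition tuples :: "nat set \<Rightarrow> nat \<Rightarrow> nat list set" where
  "tuples S n = {xs. length xs = n \<and> set xs \<subseteq> S}"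

definition closed_set :: "('r,'f) signature \<Rightarrow> ('r,'f) struc \<Rightarrow> nat set \<Rightarrow> bool" where
  "closed_set \<sigma> A S \<longleftrightarrow> (\<forall>f. \<forall>xs\<in>tuples S (far \<sigma> f). fn A f xs \<in> S)"

definition is_struc :: "('r,'f) signature \<Rightarrow> ('r,'f) struc \<Rightarrow> bool" where
  "is_struc \<sigma> A \<longleftrightarrow> closed_set \<sigma> A (univ A)"

definition hom :: "('r,'f) signature \<Rightarrow> ('r,'f) struc \<Rightarrow> ('r,'f) struc \<Rightarrow> (nat \<Rightarrow> nat) \<Rightarrow> bool" where
  "hom \<sigma> A B h \<longleftrightarrow>
     (\<forall>x\<in>univ A. h x \<in> univ B) \<and>
     (\<forall>R. \<forall>xs\<in>tuples (univ A) (rar \<sigma> R). rel A R xs \<longrightarrow> rel B R (map h xs)) \<and>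
     (\<forall>f. \<forall>xs\<in>tuples (univ A) (far \<sigma> f). h (fn A f xs) = fn B f (map h xs))"

definition emb :: "('r,'f) signature \<Rightarrow> ('r,'f) struc \<Rightarrow> ('r,'f) struc \<Rightarrow> (nat \<Rightarrow> nat) \<Rightarrow> bool" where
  "emb \<sigma> A B h \<longleftrightarrow> hom \<sigma> A B h \<and> inj_on h (univ A) \<and>
     (\<forall>R. \<forall>xs\<in>tuples (univ A) (rar \<sigma> R). rel B R (map h xs) \<longrightarrow> rel A R xs)"

definition iso :: "('r,'f) signature \<Rightarrow> ('r,'f) struc \<Rightarrow> ('r,'f) struc \<Rightarrow> (nat \<Rightarrow> nat) \<Rightarrow> bool" where
  "iso \<sigma> A B h \<longleftrightarrow> emb \<sigma> A B h \<and> h ` univ A = univ B"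

definition isomorphic :: "('r,'f) signature \<Rightarrow> ('r,'f) struc \<Rightarrow> ('r,'f) struc \<Rightarrow> bool" where
  "isomorphic \<sigma> A B \<longleftrightarrow> (\<exists>h. iso \<sigma> A B h)"

definition in_cls :: "('r,'f) signature \<Rightarrow> ('r,'f) struc set \<Rightarrow> ('r,'f) struc \<Rightarrow> bool" where
  "in_cls \<sigma> K A \<longleftrightarrow> (\<exists>B\<in>K. isomorphic \<sigma> A B)"

definition Aut :: "('r,'f) signature \<Rightarrow> ('r,'f) struc \<Rightarrow> (nat \<Rightarrow> nat) set" where
  "Aut \<sigma> A = {\<alpha>. iso \<sigma> A A \<alpha>}"

definition gen :: "('r,'f) signature \<Rightarrow> ('r,'f) struc \<Rightarrow> nat set \<Rightarrow> nat set" where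
  "gen \<sigma> A X = \<Inter>{S. X \<subseteq> S \<and> S \<subseteq> univ A \<and> closed_set \<sigma> A S}"

definition restr :: "('r,'f) struc \<Rightarrow> nat set \<Rightarrow> ('r,'f) struc" where
  "restr A S = A\<lparr>univ := S\<rparr>"

definition gen_sub :: "('r,'f) signature \<Rightarrow> ('r,'f) struc \<Rightarrow> nat set \<Rightarrow> ('r,'f) struc" where
  "gen_sub \<sigma> A X = restr A (gen \<sigma> A X)"

definition fin_gen :: "('r,'f) signature \<Rightarrow> ('r,'f) struc \<Rightarrow> bool" where
  "fin_gen \<sigma> A \<longleftrightarrow> (\<exists>X. finite X \<and> X \<subseteq> univ A \<and> gen \<sigma> A X = univ A)"

definition locally_finite :: "('r,'f) signature \<Rightarrow> ('r,'f) struc \<Rightarrow> bool" where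
  "locally_finite \<sigma> A \<longleftrightarrow> (\<forall>X. finite X \<and> X \<subseteq> univ A \<longrightarrow> finite (gen \<sigma> A X))"

definition age_class :: "('r,'f) signature \<Rightarrow> ('r,'f) struc set \<Rightarrow> bool" where
  "age_class \<sigma> K \<longleftrightarrow>
     (\<forall>A\<in>K. is_struc \<sigma> A \<and> fin_gen \<sigma> A) \<and>
     (\<exists>S\<subseteq>K. countable S \<and> (\<forall>A\<in>K. \<exists>B\<in>S. isomorphic \<sigma> A B)) \<and>
     (\<forall>A\<in>K. \<forall>X. finite X \<and> X \<subseteq> univ A \<longrightarrow> in_cls \<sigma> K (gen_sub \<sigma> A X)) \<and>
     (\<forall>A\<in>K. \<forall>B\<in>K. \<exists>C\<in>K. \<exists>f g. emb \<sigma> A C f \<and> emb \<sigma> B C g)"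

definition amalgamation :: "('r,'f) signature \<Rightarrow> ('r,'f) struc set \<Rightarrow> bool" where
  "amalgamation \<sigma> K \<longleftrightarrow>
     (\<forall>A\<in>K. \<forall>B\<in>K. \<forall>C\<in>K. \<forall>f g. emb \<sigma> A B f \<and> emb \<sigma> A C g \<longrightarrow>
        (\<exists>D\<in>K. \<exists>f' g'. emb \<sigma> B D f' \<and> emb \<sigma> C D g' \<and>
            (\<forall>x\<in>univ A. f' (f x) = g' (g x))))"

definition fraisse_class :: "('r,'f) signature \<Rightarrow> ('r,'f) struc set \<Rightarrow> bool" where
  "fraisse_class \<sigma> K \<longleftrightarrow> age_class \<sigma> K \<and> amalgamation \<sigma> K"

definition cbar :: "('r,'f) signature \<Rightarrow> ('r,'f) struc set \<Rightarrow> ('r,'f) struc \<Rightarrow> bool" where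
  "cbar \<sigma> K A \<longleftrightarrow> is_struc \<sigma> A \<and>
     (\<forall>X. finite X \<and> X \<subseteq> univ A \<longrightarrow> in_cls \<sigma> K (gen_sub \<sigma> A X))"

definition homogeneous_struc :: "('r,'f) signature \<Rightarrow> ('r,'f) struc \<Rightarrow> bool" where
  "homogeneous_struc \<sigma> M \<longleftrightarrow>
     (\<forall>X Y h. finite X \<and> X \<subseteq> univ M \<and> finite Y \<and> Y \<subseteq> univ M \<and>
        iso \<sigma> (gen_sub \<sigma> M X) (gen_sub \<sigma> M Y) h \<longrightarrow>
        (\<exists>\<alpha>\<in>Aut \<sigma> M. \<forall>x\<in>gen \<sigma> M X. \<alpha> x = h x))"

definition age_is :: "('r,'f) signature \<Rightarrow> ('r,'f) struc \<Rightarrow> ('r,'f) struc set \<Rightarrow> bool" where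
  "age_is \<sigma> M K \<longleftrightarrow>
     (\<forall>X. finite X \<and> X \<subseteq> univ M \<longrightarrow> in_cls \<sigma> K (gen_sub \<sigma> M X)) \<and>
     (\<forall>A\<in>K. \<exists>h. emb \<sigma> A M h)"

definition fraisse_limit :: "('r,'f) signature \<Rightarrow> ('r,'f) struc set \<Rightarrow> ('r,'f) struc \<Rightarrow> bool" where
  "fraisse_limit \<sigma> K M \<longleftrightarrow> is_struc \<sigma> M \<and> homogeneous_struc \<sigma> M \<and> age_is \<sigma> M K"

definition oligomorphic :: "nat set \<Rightarrow> (nat \<Rightarrow> nat) set \<Rightarrow> bool" where
  "oligomorphic \<Omega> G \<longleftrightarrow>
     (\<forall>n\<ge>1. finite ((\<lambda>xs. {map g xs | g. g \<in> G}) ` tuples \<Omega> n))"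

definition universal_hom :: "('r,'f) signature \<Rightarrow> ('r,'f) struc set \<Rightarrow> ('r,'f) struc \<Rightarrow>
    ('r,'f) struc \<Rightarrow> (nat \<Rightarrow> nat) \<Rightarrow> bool" where
  "universal_hom \<sigma> K V T u \<longleftrightarrow> cbar \<sigma> K V \<and> is_struc \<sigma> T \<and> hom \<sigma> V T u \<and>
     (\<forall>A h. cbar \<sigma> K A \<and> hom \<sigma> A T h \<longrightarrow>
        (\<exists>\<iota>. emb \<sigma> A V \<iota> \<and> (\<forall>x\<in>univ A. h x = u (\<iota> x))))"

definition homogeneous_hom :: "('r,'f) signature \<Rightarrow> ('r,'f) struc \<Rightarrow>
    ('r,'f) struc \<Rightarrow> (nat \<Rightarrow> nat) \<Rightarrow> bool" where
  "homogeneous_hom \<sigma> V T u \<longleftrightarrow>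
     (\<forall>X \<iota>. finite X \<and> X \<subseteq> univ V \<and> emb \<sigma> (gen_sub \<sigma> V X) V \<iota> \<and>
        (\<forall>x\<in>gen \<sigma> V X. u (\<iota> x) = u x) \<longrightarrow>
        (\<exists>\<alpha>\<in>Aut \<sigma> V. (\<forall>x\<in>univ V. u (\<alpha> x) = u x) \<and> (\<forall>x\<in>gen \<sigma> V X. \<alpha> x = \<iota> x)))"

end

theory Submission
  imports Defs
begin


lemma restr_simps[simp]:
  "univ (restr A S) = S" "rel (restr A S) = rel A" "fn (restr A S) = fn A"
  by (simp_all add: restr_def)

lemma tuples_iff[simp]: "xs \<in> tuples S n \<longleftrightarrow> length xs = n \<and> set xs \<subseteq> S"
  by (simp add: tuples_def)

lemma gen_least:
  "X \<subseteq> S \<Longrightarrow> S \<subseteq> univ A \<Longrightarrow> closed_set \<sigma> A S \<Longrightarrow> gen \<sigma> A X \<subseteq> S"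
  unfolding gen_def by blast

lemma gen_props:
  assumes "is_struc \<sigma> A" "X \<subseteq> univ A"
  shows "gen \<sigma> A X \<subseteq> univ A" "X \<subseteq> gen \<sigma> A X" "closed_set \<sigma> A (gen \<sigma> A X)"
proof -
  have ne: "univ A \<in> {S. X \<subseteq> S \<and> S \<subseteq> univ A \<and> closed_set \<sigma> A S}"
    using assms by (simp add: is_struc_def)
  show "gen \<sigma> A X \<subseteq> univ A" using ne unfolding gen_def by blast
  show "X \<subseteq> gen \<sigma> A X" unfolding gen_def by blast
  show "closed_set \<sigma> A (gen \<sigma> A X)"
    unfolding closed_set_def
  proof (intro allI ballI)
    fix f xs assume xs: "xs \<in> tuples (gen \<sigma> A X) (far \<sigma> f)"
    show "fn A f xs \<in> gen \<sigma> A X" unfolding gen_def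
    proof (rule InterI)
      fix S assume S: "S \<in> {S. X \<subseteq> S \<and> S \<subseteq> univ A \<and> closed_set \<sigma> A S}"
      then have "gen \<sigma> A X \<subseteq> S" unfolding gen_def by blast
      then have "xs \<in> tuples S (far \<sigma> f)" using xs by auto
      then show "fn A f xs \<in> S" using S by (auto simp: closed_set_def)
    qed
  qed
qed

lemma gen_fn:
  assumes "is_struc \<sigma> A" "X \<subseteq> univ A" "length xs = far \<sigma> f" "set xs \<subseteq> gen \<sigma> A X"
  shows "fn A f xs \<in> gen \<sigma> A X"
  using gen_props(3)[OF assms(1,2)] assms(3,4) by (auto simp: closed_set_def)

lemma gen_mono:
  assumes "is_struc \<sigma> A" "X \<subseteq> Y" "Y \<subseteq> univ A"
  shows "gen \<sigma> A X \<subseteq> gen \<sigma> A Y"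
  using gen_least[of X "gen \<sigma> A Y" A \<sigma>] gen_props[OF assms(1,3)] assms(2) by blast

lemma gen_gen_un:
  assumes "is_struc \<sigma> A" "X \<subseteq> univ A" "Z \<subseteq> univ A"
  shows "gen \<sigma> A (gen \<sigma> A X \<union> Z) = gen \<sigma> A (X \<union> Z)"
proof
  have XZ: "X \<union> Z \<subseteq> univ A" using assms by auto
  have "gen \<sigma> A X \<subseteq> gen \<sigma> A (X \<union> Z)" using gen_mono[OF assms(1) _ XZ] by auto
  moreover have "Z \<subseteq> gen \<sigma> A (X \<union> Z)" using gen_props(2)[OF assms(1) XZ] by auto
  ultimately show "gen \<sigma> A (gen \<sigma> A X \<union> Z) \<subseteq> gen \<sigma> A (X \<union> Z)"
    using gen_least[of "gen \<sigma> A X \<union> Z" "gen \<sigma> A (X \<union> Z)" A \<sigma>] gen_props[OF assms(1) XZ] by blast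
next
  have G: "gen \<sigma> A X \<union> Z \<subseteq> univ A" using gen_props(1)[OF assms(1,2)] assms(3) by auto
  show "gen \<sigma> A (X \<union> Z) \<subseteq> gen \<sigma> A (gen \<sigma> A X \<union> Z)"
    apply (rule gen_mono[OF assms(1) _ G])
    using gen_props(2)[OF assms(1,2)] by auto
qed

lemma ex_map_pre:
  assumes "set ys \<subseteq> e ` S"
  shows "\<exists>xs. set xs \<subseteq> S \<and> ys = map e xs"
  using assms
proof (induction ys)
  case Nil then show ?case by auto
next
  case (Cons y ys)
  then obtain xs where "set xs \<subseteq> S" "ys = map e xs" by auto
  moreover obtain x where "x \<in> S" "y = e x" using Cons.prems by auto
  ultimately show ?case by (intro exI[of _ "x # xs"]) auto
qed

lemma gen_image:
  assumes A: "is_struc \<sigma> A" and B: "is_struc \<sigma> B" and h: "hom \<sigma> A B e" and X: "X \<subseteq> univ A"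
  shows "e ` gen \<sigma> A X = gen \<sigma> B (e ` X)"
proof
  have eX: "e ` X \<subseteq> univ B" using h X unfolding hom_def by auto
  define S where "S = {x \<in> univ A. e x \<in> gen \<sigma> B (e ` X)}"
  have "X \<subseteq> S" using X gen_props(2)[OF B eX] unfolding S_def by auto
  moreover have "S \<subseteq> univ A" unfolding S_def by auto
  moreover have "closed_set \<sigma> A S"
    unfolding closed_set_def
  proof (intro allI ballI)
    fix f xs assume xs: "xs \<in> tuples S (far \<sigma> f)"
    then have xsA: "xs \<in> tuples (univ A) (far \<sigma> f)" unfolding S_def by auto
    then have "fn A f xs \<in> univ A" using A unfolding is_struc_def closed_set_def by auto
    moreover have "e (fn A f xs) = fn B f (map e xs)" using h xsA unfolding hom_def by auto
    moreover have "fn B f (map e xs) \<in> gen \<sigma> B (e ` X)"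
      apply (rule gen_fn[OF B eX]) using xs unfolding S_def by auto
    ultimately show "fn A f xs \<in> S" unfolding S_def by auto
  qed
  ultimately have "gen \<sigma> A X \<subseteq> S" by (rule gen_least)
  then show "e ` gen \<sigma> A X \<subseteq> gen \<sigma> B (e ` X)" unfolding S_def by auto
next
  have eX: "e ` X \<subseteq> e ` gen \<sigma> A X" using gen_props(2)[OF A X] by auto
  have sub: "e ` gen \<sigma> A X \<subseteq> univ B" using gen_props(1)[OF A X] h unfolding hom_def by auto
  have "closed_set \<sigma> B (e ` gen \<sigma> A X)"
    unfolding closed_set_def
  proof (intro allI ballI)
    fix f ys assume ys: "ys \<in> tuples (e ` gen \<sigma> A X) (far \<sigma> f)"
    then obtain xs where xs: "set xs \<subseteq> gen \<sigma> A X" "ys = map e xs"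
      using ex_map_pre[of ys e "gen \<sigma> A X"] by auto
    have len: "length xs = far \<sigma> f" using ys xs by auto
    have xsA: "xs \<in> tuples (univ A) (far \<sigma> f)" using xs len gen_props(1)[OF A X] by auto
    have "fn B f ys = e (fn A f xs)" using h xsA xs unfolding hom_def by auto
    moreover have "fn A f xs \<in> gen \<sigma> A X" using gen_fn[OF A X len xs(1)] .
    ultimately show "fn B f ys \<in> e ` gen \<sigma> A X" by auto
  qed
  then show "gen \<sigma> B (e ` X) \<subseteq> e ` gen \<sigma> A X" using gen_least[OF eX sub] by blast
qed

lemma hom_comp:
  assumes "hom \<sigma> A B f" "hom \<sigma> B C g" shows "hom \<sigma> A C (g \<circ> f)"
proof -
  have t: "\<And>xs n. xs \<in> tuples (univ A) n \<Longrightarrow> map f xs \<in> tuples (univ B) n"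
    using assms(1) unfolding hom_def by auto
  show ?thesis using assms unfolding hom_def
    apply (intro conjI)
    apply simp
    apply (metis map_map t)
    apply (metis map_map t o_apply)
    done
qed

lemma emb_comp:
  assumes "emb \<sigma> A B f" "emb \<sigma> B C g" shows "emb \<sigma> A C (g \<circ> f)"
proof -
  have hf: "hom \<sigma> A B f" and hg: "hom \<sigma> B C g" using assms unfolding emb_def by auto
  have t: "\<And>xs n. xs \<in> tuples (univ A) n \<Longrightarrow> map f xs \<in> tuples (univ B) n"
    using hf unfolding hom_def by auto
  have "inj_on (g \<circ> f) (univ A)"
    using assms hf unfolding emb_def hom_def by (metis comp_inj_on inj_on_subset image_subset_iff)
  moreover have "\<forall>R. \<forall>xs\<in>tuples (univ A) (rar \<sigma> R). rel C R (map (g \<circ> f) xs) \<longrightarrow> rel A R xs"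
    using assms t unfolding emb_def by (metis map_map)
  ultimately show ?thesis using hom_comp[OF hf hg] unfolding emb_def by auto
qed

lemma iso_comp:
  assumes "iso \<sigma> A B f" "iso \<sigma> B C g" shows "iso \<sigma> A C (g \<circ> f)"
  using assms emb_comp unfolding iso_def by (metis image_comp)

lemma iso_inv:
  assumes S: "is_struc \<sigma> A" and f: "iso \<sigma> A B f"
  shows "iso \<sigma> B A (inv_into (univ A) f)"
proof -
  let ?g = "inv_into (univ A) f"
  have inj: "inj_on f (univ A)" and im: "f ` univ A = univ B" and hf: "hom \<sigma> A B f"
    and refl: "\<forall>R. \<forall>xs\<in>tuples (univ A) (rar \<sigma> R). rel B R (map f xs) \<longrightarrow> rel A R xs"
    using f unfolding iso_def emb_def by auto
  have gB: "\<And>y. y \<in> univ B \<Longrightarrow> ?g y \<in> univ A" using im by (metis inv_into_into)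
  have fg: "\<And>y. y \<in> univ B \<Longrightarrow> f (?g y) = y" using im by (metis f_inv_into_f)
  have gf: "\<And>x. x \<in> univ A \<Longrightarrow> ?g (f x) = x" using inj by (metis inv_into_f_f)
  have mfg: "\<And>ys. set ys \<subseteq> univ B \<Longrightarrow> map f (map ?g ys) = ys"
    using fg by (simp add: map_idI subset_iff)
  have hg: "hom \<sigma> B A ?g"
    unfolding hom_def
  proof (intro conjI allI ballI impI)
    fix y assume "y \<in> univ B" then show "?g y \<in> univ A" by (rule gB)
  next
    fix R ys assume ys: "ys \<in> tuples (univ B) (rar \<sigma> R)" and r: "rel B R ys"
    then have "map ?g ys \<in> tuples (univ A) (rar \<sigma> R)" using gB by auto
    moreover have "rel B R (map f (map ?g ys))" using r mfg ys by auto
    ultimately show "rel A R (map ?g ys)" using refl by auto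
  next
    fix F ys assume ys: "ys \<in> tuples (univ B) (far \<sigma> F)"
    then have xs: "map ?g ys \<in> tuples (univ A) (far \<sigma> F)" using gB by auto
    then have "fn A F (map ?g ys) \<in> univ A" using S unfolding is_struc_def closed_set_def by auto
    moreover have "f (fn A F (map ?g ys)) = fn B F ys" using hf xs mfg ys unfolding hom_def by auto
    ultimately show "?g (fn B F ys) = fn A F (map ?g ys)" using gf by metis
  qed
  have "inj_on ?g (univ B)" using im by (simp add: inj_on_inv_into)
  moreover have "\<forall>R. \<forall>ys\<in>tuples (univ B) (rar \<sigma> R). rel A R (map ?g ys) \<longrightarrow> rel B R ys"
  proof (intro allI ballI impI)
    fix R ys assume ys: "ys \<in> tuples (univ B) (rar \<sigma> R)" and r: "rel A R (map ?g ys)"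
    have "map ?g ys \<in> tuples (univ A) (rar \<sigma> R)" using ys gB by auto
    then have "rel B R (map f (map ?g ys))" using hf r unfolding hom_def by blast
    then show "rel B R ys" using mfg ys by auto
  qed
  moreover have "?g ` univ B = univ A" using im inj bij_betw_inv_into[of f "univ A" "univ B"]
    by (simp add: bij_betw_def)
  ultimately show ?thesis using hg unfolding iso_def emb_def by auto
qed

lemma iso_id: "iso \<sigma> A A id"
  unfolding iso_def emb_def hom_def by auto

lemma is_struc_restr: "closed_set \<sigma> A S \<Longrightarrow> is_struc \<sigma> (restr A S)"
  unfolding is_struc_def closed_set_def by auto

lemma emb_restr_dom:
  assumes "emb \<sigma> A B e" "S \<subseteq> univ A" shows "emb \<sigma> (restr A S) B e"
  using assms unfolding emb_def hom_def by (auto intro: inj_on_subset)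

lemma emb_restr_cod:
  assumes "emb \<sigma> A (restr B S) e" "S \<subseteq> univ B" shows "emb \<sigma> A B e"
  using assms unfolding emb_def hom_def by auto

lemma emb_restr_iso:
  assumes "emb \<sigma> A B e" "S \<subseteq> univ A" "e ` S = S'"
  shows "iso \<sigma> (restr A S) (restr B S') e"
  using assms unfolding iso_def emb_def hom_def by (auto intro: inj_on_subset)



locale setting =
  fixes \<sigma> :: "('r,'f) signature" and C :: "('r,'f) struc set" and V T :: "('r,'f) struc"
    and u :: "nat \<Rightarrow> nat"
  assumes UH: "universal_hom \<sigma> C V T u" and HH: "homogeneous_hom \<sigma> V T u"
begin

lemma sV: "is_struc \<sigma> V" using UH unfolding universal_hom_def cbar_def by auto
lemma sT: "is_struc \<sigma> T" using UH unfolding universal_hom_def by auto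
lemma huV: "hom \<sigma> V T u" using UH unfolding universal_hom_def by auto
lemma uV: "x \<in> univ V \<Longrightarrow> u x \<in> univ T" using huV unfolding hom_def by auto

definition good :: "(nat \<Rightarrow> nat) \<Rightarrow> nat set \<Rightarrow> nat set \<Rightarrow> (nat \<Rightarrow> nat) \<Rightarrow> bool" where
  "good \<beta> X Y p \<longleftrightarrow> finite X \<and> X \<subseteq> univ V \<and> finite Y \<and> Y \<subseteq> univ V \<and>
     iso \<sigma> (gen_sub \<sigma> V X) (gen_sub \<sigma> V Y) p \<and> (\<forall>x\<in>gen \<sigma> V X. u (p x) = \<beta> (u x))"

lemma good_D:
  assumes "good \<beta> X Y p"
  shows "finite X" "X \<subseteq> univ V" "finite Y" "Y \<subseteq> univ V"
    "iso \<sigma> (restr V (gen \<sigma> V X)) (restr V (gen \<sigma> V Y)) p"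
    "\<And>x. x \<in> gen \<sigma> V X \<Longrightarrow> u (p x) = \<beta> (u x)"
    "p ` gen \<sigma> V X = gen \<sigma> V Y" "inj_on p (gen \<sigma> V X)"
    "gen \<sigma> V X \<subseteq> univ V" "gen \<sigma> V Y \<subseteq> univ V"
  using assms gen_props(1)[OF sV] unfolding good_def gen_sub_def iso_def emb_def by auto

lemma Aut_hom: "\<beta> \<in> Aut \<sigma> A \<Longrightarrow> hom \<sigma> A A \<beta>"
  unfolding Aut_def iso_def emb_def by auto

lemma Aut_inv: "is_struc \<sigma> A \<Longrightarrow> \<beta> \<in> Aut \<sigma> A \<Longrightarrow> inv_into (univ A) \<beta> \<in> Aut \<sigma> A"
  unfolding Aut_def using iso_inv by auto

lemma Aut_bij: "\<beta> \<in> Aut \<sigma> A \<Longrightarrow> inj_on \<beta> (univ A) \<and> \<beta> ` univ A = univ A"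
  unfolding Aut_def iso_def emb_def by auto

lemma ext:
  assumes b: "\<beta> \<in> Aut \<sigma> T" and g: "good \<beta> X Y p"
  shows "\<exists>e. emb \<sigma> V V e \<and> (\<forall>x\<in>gen \<sigma> V X. e x = p x) \<and> (\<forall>x\<in>univ V. u (e x) = \<beta> (u x))"
proof -
  note gd = good_D[OF g]
  have hb: "hom \<sigma> V T (\<beta> \<circ> u)" using hom_comp[OF huV Aut_hom[OF b]] .
  have cV: "cbar \<sigma> C V" using UH unfolding universal_hom_def by auto
  obtain \<iota> where iota: "emb \<sigma> V V \<iota>" "\<forall>x\<in>univ V. (\<beta> \<circ> u) x = u (\<iota> x)"
  proof -
    have "\<exists>\<iota>. emb \<sigma> V V \<iota> \<and> (\<forall>x\<in>univ V. (\<beta> \<circ> u) x = u (\<iota> x))"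
      by (rule UH[unfolded universal_hom_def, THEN conjunct2, THEN conjunct2, THEN conjunct2, rule_format])
        (use hb cV in \<open>auto simp: comp_def\<close>)
    then show ?thesis using that by blast
  qed
  let ?GX = "gen \<sigma> V X" and ?GY = "gen \<sigma> V Y"
  let ?pi = "inv_into ?GX p"
  have sGX: "is_struc \<sigma> (restr V ?GX)" using is_struc_restr gen_props(3)[OF sV gd(2)] by blast
  have ipi: "iso \<sigma> (restr V ?GY) (restr V ?GX) ?pi"
    using iso_inv[OF sGX gd(5)] by simp
  have e1: "emb \<sigma> (restr V ?GX) V \<iota>" using emb_restr_dom[OF iota(1) gd(9)] .
  have qemb: "emb \<sigma> (restr V ?GY) V (\<iota> \<circ> ?pi)"
    using emb_comp[OF _ e1] ipi unfolding iso_def by blast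
  have pi_in: "\<And>y. y \<in> ?GY \<Longrightarrow> ?pi y \<in> ?GX \<and> p (?pi y) = y"
    using gd(7) by (metis inv_into_into f_inv_into_f)
  have qtw: "\<forall>y\<in>?GY. u ((\<iota> \<circ> ?pi) y) = u y"
  proof
    fix y assume y: "y \<in> ?GY"
    then have "?pi y \<in> univ V" using pi_in gd(9) by auto
    then have "u (\<iota> (?pi y)) = \<beta> (u (?pi y))" using iota(2) by auto
    also have "\<dots> = u (p (?pi y))" using gd(6)[OF conjunct1[OF pi_in[OF y]]] by (rule sym)
    also have "\<dots> = u y" using pi_in y by auto
    finally show "u ((\<iota> \<circ> ?pi) y) = u y" by simp
  qed
  obtain \<gamma> where gam: "\<gamma> \<in> Aut \<sigma> V" "\<forall>x\<in>univ V. u (\<gamma> x) = u x" "\<forall>y\<in>?GY. \<gamma> y = (\<iota> \<circ> ?pi) y"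
  proof -
    have "\<exists>\<gamma>\<in>Aut \<sigma> V. (\<forall>x\<in>univ V. u (\<gamma> x) = u x) \<and> (\<forall>x\<in>gen \<sigma> V Y. \<gamma> x = (\<iota> \<circ> ?pi) x)"
      by (rule HH[unfolded homogeneous_hom_def, rule_format]) (use gd(3,4) qemb qtw in \<open>auto simp: gen_sub_def comp_def\<close>)
    then show ?thesis using that by blast
  qed
  let ?gi = "inv_into (univ V) \<gamma>"
  have gbij: "inj_on \<gamma> (univ V)" "\<gamma> ` univ V = univ V" using Aut_bij[OF gam(1)] by auto
  have gi: "?gi \<in> Aut \<sigma> V" using Aut_inv[OF sV gam(1)] .
  have eemb: "emb \<sigma> V V (?gi \<circ> \<iota>)" using emb_comp[OF iota(1)] gi unfolding Aut_def iso_def by blast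
  have iV: "\<And>x. x \<in> univ V \<Longrightarrow> \<iota> x \<in> univ V" using iota(1) unfolding emb_def hom_def by auto
  have agree: "\<forall>x\<in>?GX. (?gi \<circ> \<iota>) x = p x"
  proof
    fix x assume x: "x \<in> ?GX"
    then have px: "p x \<in> ?GY" using gd(7) by auto
    have "?pi (p x) = x" using gd(8) x by (simp add: inv_into_f_f)
    then have "\<gamma> (p x) = \<iota> x" using gam(3) px by auto
    moreover have "p x \<in> univ V" using px gd(10) by auto
    moreover have "?gi (\<gamma> (p x)) = p x" using gbij(1) \<open>p x \<in> univ V\<close> by (rule inv_into_f_f)
    ultimately show "(?gi \<circ> \<iota>) x = p x" by simp
  qed
  have tw: "\<forall>x\<in>univ V. u ((?gi \<circ> \<iota>) x) = \<beta> (u x)"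
  proof
    fix x assume x: "x \<in> univ V"
    let ?z = "?gi (\<iota> x)"
    have z: "?z \<in> univ V" "\<gamma> ?z = \<iota> x" using iV[OF x] gbij(2)
      by (metis inv_into_into, metis f_inv_into_f)
    have "u ?z = u (\<gamma> ?z)" using gam(2) z(1) by auto
    also have "\<dots> = \<beta> (u x)" using z(2) iota(2) x by auto
    finally show "u ((?gi \<circ> \<iota>) x) = \<beta> (u x)" by simp
  qed
  show ?thesis using eemb agree tw by blast
qed

lemma forth:
  assumes b: "\<beta> \<in> Aut \<sigma> T" and g: "good \<beta> X Y p" and v: "v \<in> univ V"
  shows "\<exists>p'. good \<beta> (insert v X) (insert (p' v) Y) p' \<and> (\<forall>x\<in>gen \<sigma> V X. p' x = p x)"
proof -
  note gd = good_D[OF g]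
  obtain e where e: "emb \<sigma> V V e" "\<forall>x\<in>gen \<sigma> V X. e x = p x" "\<forall>x\<in>univ V. u (e x) = \<beta> (u x)"
    using ext[OF b g] by blast
  have he: "hom \<sigma> V V e" using e(1) unfolding emb_def by auto
  have ev: "e v \<in> univ V" using he v unfolding hom_def by auto
  have vX: "insert v X \<subseteq> univ V" using v gd(2) by auto
  have eXV: "e ` X \<subseteq> univ V" using he gd(2) unfolding hom_def by auto
  have "gen \<sigma> V (e ` X) = e ` gen \<sigma> V X" using gen_image[OF sV sV he gd(2)] by simp
  also have "\<dots> = p ` gen \<sigma> V X" using e(2) by (auto simp: image_def)
  also have "\<dots> = gen \<sigma> V Y" using gd(7) .
  finally have geX: "gen \<sigma> V (e ` X) = gen \<sigma> V Y" .
  have "e ` gen \<sigma> V (insert v X) = gen \<sigma> V (e ` insert v X)" using gen_image[OF sV sV he vX] .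
  also have "\<dots> = gen \<sigma> V (e ` X \<union> {e v})" by (simp add: Un_commute)
  also have "\<dots> = gen \<sigma> V (gen \<sigma> V (e ` X) \<union> {e v})" using gen_gen_un[OF sV eXV, of "{e v}"] ev by simp
  also have "\<dots> = gen \<sigma> V (gen \<sigma> V Y \<union> {e v})" using geX by simp
  also have "\<dots> = gen \<sigma> V (insert (e v) Y)" using gen_gen_un[OF sV gd(4), of "{e v}"] ev by simp
  finally have im: "e ` gen \<sigma> V (insert v X) = gen \<sigma> V (insert (e v) Y)" .
  have iso: "iso \<sigma> (gen_sub \<sigma> V (insert v X)) (gen_sub \<sigma> V (insert (e v) Y)) e"
    unfolding gen_sub_def using emb_restr_iso[OF e(1) gen_props(1)[OF sV vX] im] .
  have "\<forall>x\<in>gen \<sigma> V (insert v X). u (e x) = \<beta> (u x)" using e(3) gen_props(1)[OF sV vX] by auto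
  then have "good \<beta> (insert v X) (insert (e v) Y) e"
    unfolding good_def using gd(1-4) v ev iso by auto
  then show ?thesis using e(2) by blast
qed

lemma good_inv:
  assumes g: "good \<beta> X Y p" and bb: "\<forall>t\<in>univ T. \<beta>' (\<beta> t) = t"
  shows "good \<beta>' Y X (inv_into (gen \<sigma> V X) p)"
proof -
  note gd = good_D[OF g]
  have sGX: "is_struc \<sigma> (restr V (gen \<sigma> V X))" using is_struc_restr gen_props(3)[OF sV gd(2)] by blast
  have ipi: "iso \<sigma> (gen_sub \<sigma> V Y) (gen_sub \<sigma> V X) (inv_into (gen \<sigma> V X) p)"
    using iso_inv[OF sGX gd(5)] unfolding gen_sub_def by simp
  have "\<forall>y\<in>gen \<sigma> V Y. u (inv_into (gen \<sigma> V X) p y) = \<beta>' (u y)"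
  proof
    fix y assume y: "y \<in> gen \<sigma> V Y"
    then obtain x where x: "x \<in> gen \<sigma> V X" "y = p x" using gd(7) by auto
    have "inv_into (gen \<sigma> V X) p y = x" using x gd(8) by (simp add: inv_into_f_f)
    moreover have "u x \<in> univ T" using uV x gd(9) by auto
    ultimately show "u (inv_into (gen \<sigma> V X) p y) = \<beta>' (u y)" using gd(6) x bb by auto
  qed
  then show ?thesis using gd(1-4) ipi unfolding good_def by auto
qed

lemma back_step:
  assumes b: "\<beta> \<in> Aut \<sigma> T" and g: "good \<beta> X Y p" and w: "w \<in> univ V"
  shows "\<exists>X' p'. good \<beta> X' (insert w Y) p' \<and> X \<subseteq> X' \<and> (\<forall>x\<in>gen \<sigma> V X. p' x = p x)"
proof -
  note gd = good_D[OF g]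
  let ?b' = "inv_into (univ T) \<beta>"
  have b': "?b' \<in> Aut \<sigma> T" using Aut_inv[OF sT b] .
  have bij: "inj_on \<beta> (univ T)" "\<beta> ` univ T = univ T" using Aut_bij[OF b] by auto
  have bb1: "\<forall>t\<in>univ T. ?b' (\<beta> t) = t" using bij(1) by (simp add: inv_into_f_f)
  have bb2: "\<forall>t\<in>univ T. \<beta> (?b' t) = t" using bij(2) by (metis f_inv_into_f)
  let ?q = "inv_into (gen \<sigma> V X) p"
  have gq: "good ?b' Y X ?q" using good_inv[OF g bb1] .
  obtain q' where q': "good ?b' (insert w Y) (insert (q' w) X) q'" "\<forall>y\<in>gen \<sigma> V Y. q' y = ?q y"
    using forth[OF b' gq w] by blast
  let ?G = "gen \<sigma> V (insert w Y)"
  have g2: "good \<beta> (insert (q' w) X) (insert w Y) (inv_into ?G q')" using good_inv[OF q'(1) bb2] .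
  have "\<forall>x\<in>gen \<sigma> V X. inv_into ?G q' x = p x"
  proof
    fix x assume x: "x \<in> gen \<sigma> V X"
    have px: "p x \<in> gen \<sigma> V Y" using x gd(7) by auto
    have pG: "p x \<in> ?G" using px gen_mono[OF sV, of Y "insert w Y"] w gd(4) by auto
    have qp: "q' (p x) = x" using q'(2) px x gd(8) by (simp add: inv_into_f_f)
    have iq: "inj_on q' ?G" using good_D(8)[OF q'(1)] .
    show "inv_into ?G q' x = p x" using inv_into_f_f[OF iq pG] qp by simp
  qed
  then show ?thesis using g2 by blast
qed

lemma both:
  assumes b: "\<beta> \<in> Aut \<sigma> T" and g: "good \<beta> X Y p" and v: "v \<in> univ V"
  shows "\<exists>X' Y' p'. good \<beta> X' Y' p' \<and> X \<subseteq> X' \<and> Y \<subseteq> Y' \<and> v \<in> X' \<and> v \<in> Y' \<and>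
            (\<forall>x\<in>gen \<sigma> V X. p' x = p x)"
proof -
  obtain p1 where p1: "good \<beta> (insert v X) (insert (p1 v) Y) p1" "\<forall>x\<in>gen \<sigma> V X. p1 x = p x"
    using forth[OF b g v] by blast
  obtain X' p' where p': "good \<beta> X' (insert v (insert (p1 v) Y)) p'" "insert v X \<subseteq> X'"
      "\<forall>x\<in>gen \<sigma> V (insert v X). p' x = p1 x"
    using back_step[OF b p1(1) v] by blast
  have "gen \<sigma> V X \<subseteq> gen \<sigma> V (insert v X)"
    using gen_mono[OF sV _ good_D(2)[OF p1(1)]] by auto
  then show ?thesis using p1 p' by (intro exI[of _ X'] exI[of _ "insert v (insert (p1 v) Y)"] exI[of _ p']) auto
qed

end


context setting
begin

lemma good_rel:
  assumes "good \<beta> X Y p" "length xs = rar \<sigma> R" "set xs \<subseteq> gen \<sigma> V X"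
  shows "rel V R (map p xs) = rel V R xs"
  using good_D(5)[OF assms(1)] assms(2,3) unfolding iso_def emb_def hom_def by auto

lemma good_fn:
  assumes "good \<beta> X Y p" "length xs = far \<sigma> f" "set xs \<subseteq> gen \<sigma> V X"
  shows "p (fn V f xs) = fn V f (map p xs)"
  using good_D(5)[OF assms(1)] assms(2,3) unfolding iso_def emb_def hom_def by auto

lemma lift:
  assumes b: "\<beta> \<in> Aut \<sigma> T" and g: "good \<beta> X0 Y0 p0"
  shows "\<exists>\<alpha>\<in>Aut \<sigma> V. \<forall>x\<in>gen \<sigma> V X0. \<alpha> x = p0 x"
proof (cases "univ V = {}")
  case True
  then have "gen \<sigma> V X0 = {}" using good_D(9)[OF g] by auto
  then show ?thesis using iso_id[of \<sigma> V] unfolding Aut_def by auto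
next
  case False
  have cnt: "countable (univ V)" by (rule countable_subset[OF subset_UNIV]) simp
  define en where "en = from_nat_into (univ V)"
  have rng: "range en = univ V" unfolding en_def using range_from_nat_into[OF False cnt] .
  define gd' where "gd' s \<longleftrightarrow> good \<beta> (fst s) (fst (snd s)) (snd (snd s))" for s
  define Q where "Q k s s' \<longleftrightarrow> gd' s' \<and> fst s \<subseteq> fst s' \<and> fst (snd s) \<subseteq> fst (snd s') \<and>
      (\<forall>x\<in>gen \<sigma> V (fst s). snd (snd s') x = snd (snd s) x) \<and> en k \<in> fst s' \<and> en k \<in> fst (snd s')"
    for k s s'
  define sq where "sq = rec_nat (X0, Y0, p0) (\<lambda>k s. SOME s'. Q k s s')"
  have sq0: "sq 0 = (X0, Y0, p0)" by (simp add: sq_def)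
  have sqS: "sq (Suc k) = (SOME s'. Q k (sq k) s')" for k by (simp add: sq_def)
  have exQ: "\<exists>s'. Q k s s'" if gs: "gd' s" for k s
  proof -
    have ek: "en k \<in> univ V" using rng by auto
    obtain X' Y' p' where "good \<beta> X' Y' p'" "fst s \<subseteq> X'" "fst (snd s) \<subseteq> Y'" "en k \<in> X'" "en k \<in> Y'"
      "\<forall>x\<in>gen \<sigma> V (fst s). p' x = snd (snd s) x"
      using both[OF b gs[unfolded gd'_def] ek] by blast
    then show ?thesis by (intro exI[of _ "(X', Y', p')"]) (auto simp: Q_def gd'_def)
  qed
  have gall: "gd' (sq k)" for k
  proof (induction k)
    case 0 then show ?case using g sq0 by (simp add: gd'_def)
  next
    case (Suc k)
    have "Q k (sq k) (sq (Suc k))" unfolding sqS using someI_ex[OF exQ[OF Suc]] .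
    then show ?case unfolding Q_def by auto
  qed
  have Qall: "Q k (sq k) (sq (Suc k))" for k
    unfolding sqS using someI_ex[OF exQ[OF gall]] .
  define XX where "XX k = fst (sq k)" for k
  define YY where "YY k = fst (snd (sq k))" for k
  define PP where "PP k = snd (snd (sq k))" for k
  have gk: "good \<beta> (XX k) (YY k) (PP k)" for k using gall[of k] unfolding gd'_def XX_def YY_def PP_def .
  have stp: "XX k \<subseteq> XX (Suc k) \<and> YY k \<subseteq> YY (Suc k) \<and> (\<forall>x\<in>gen \<sigma> V (XX k). PP (Suc k) x = PP k x)
      \<and> en k \<in> XX (Suc k) \<and> en k \<in> YY (Suc k)" for k
    using Qall[of k] unfolding Q_def XX_def YY_def PP_def by auto
  have mono: "XX k \<subseteq> XX j \<and> YY k \<subseteq> YY j \<and> (\<forall>x\<in>gen \<sigma> V (XX k). PP j x = PP k x)" if "k \<le> j" for k j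
    using that
  proof (induction j rule: dec_induct)
    case base then show ?case by auto
  next
    case (step n)
    have "gen \<sigma> V (XX k) \<subseteq> gen \<sigma> V (XX n)"
      using gen_mono[OF sV _ good_D(2)[OF gk[of n]]] step.IH by auto
    then show ?case using step.IH stp[of n] by auto
  qed
  define idx where "idx x = (SOME k. en k = x)" for x
  have idx: "en (idx x) = x" if "x \<in> univ V" for x
    unfolding idx_def by (rule someI_ex) (metis that rng rangeE)
  define \<alpha> where "\<alpha> x = PP (Suc (idx x)) x" for x
  have inX: "x \<in> XX (Suc (idx x))" if "x \<in> univ V" for x using stp[of "idx x"] idx[OF that] by auto
  have inG: "x \<in> gen \<sigma> V (XX (Suc (idx x)))" if "x \<in> univ V" for x
    using inX[OF that] gen_props(2)[OF sV good_D(2)[OF gk]] by blast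
  have agree: "\<alpha> x = PP k x" if "x \<in> gen \<sigma> V (XX k)" for k x
  proof -
    have xV: "x \<in> univ V" using that good_D(9)[OF gk] by auto
    let ?j = "Suc (idx x)" let ?m = "max k ?j"
    have "PP ?m x = PP k x" using mono[of k ?m] that by auto
    moreover have "PP ?m x = PP ?j x" using mono[of ?j ?m] inG[OF xV] by auto
    ultimately show ?thesis unfolding \<alpha>_def by simp
  qed
  have cover: "F \<subseteq> univ V \<Longrightarrow> \<exists>k. F \<subseteq> XX k" if "finite F" for F
    using that
  proof (induction F rule: finite_induct)
    case empty then show ?case by auto
  next
    case (insert x F)
    then obtain k where k: "F \<subseteq> XX k" by auto
    let ?j = "Suc (idx x)"
    have "x \<in> XX ?j" using inX insert.prems by auto
    then show ?case using k mono[of k "max k ?j"] mono[of ?j "max k ?j"]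
      by (intro exI[of _ "max k ?j"]) auto
  qed
  have coverg: "\<exists>k. set xs \<subseteq> gen \<sigma> V (XX k)" if xsV: "set xs \<subseteq> univ V" for xs
  proof -
    obtain k where "set xs \<subseteq> XX k" using cover[of "set xs"] xsV by auto
    then show ?thesis using gen_props(2)[OF sV good_D(2)[OF gk[of k]]] by blast
  qed
  have mapa: "map \<alpha> xs = map (PP k) xs" if "set xs \<subseteq> gen \<sigma> V (XX k)" for xs k
    using agree that by (intro map_cong) auto
  have aV: "\<alpha> x \<in> univ V" if "x \<in> univ V" for x
  proof -
    let ?j = "Suc (idx x)"
    have "PP ?j x \<in> gen \<sigma> V (YY ?j)" using good_D(7)[OF gk[of ?j]] inG[OF that] by blast
    then show ?thesis using good_D(10)[OF gk[of ?j]] agree[OF inG[OF that]] by auto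
  qed
  have hom: "hom \<sigma> V V \<alpha>"
    unfolding hom_def
  proof (intro conjI ballI allI impI)
    fix x assume "x \<in> univ V" then show "\<alpha> x \<in> univ V" by (rule aV)
  next
    fix R xs assume xs: "xs \<in> tuples (univ V) (rar \<sigma> R)" and r: "rel V R xs"
    obtain k where k: "set xs \<subseteq> gen \<sigma> V (XX k)" using coverg[of xs] xs by auto
    have "rel V R (map (PP k) xs)" using good_rel[where R=R, OF gk[of k] _ k] xs r by auto
    then show "rel V R (map \<alpha> xs)" using mapa[OF k] by metis
  next
    fix f xs assume xs: "xs \<in> tuples (univ V) (far \<sigma> f)"
    obtain k where k: "set xs \<subseteq> gen \<sigma> V (XX k)" using coverg[of xs] xs by auto
    have "fn V f xs \<in> gen \<sigma> V (XX k)" using gen_fn[OF sV good_D(2)[OF gk[of k]]] xs k by auto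
    then have "\<alpha> (fn V f xs) = PP k (fn V f xs)" by (rule agree)
    also have "\<dots> = fn V f (map (PP k) xs)" using good_fn[where f=f, OF gk[of k] _ k] xs by auto
    finally show "\<alpha> (fn V f xs) = fn V f (map \<alpha> xs)" using mapa[OF k] by metis
  qed
  have inj: "inj_on \<alpha> (univ V)"
  proof (rule inj_onI)
    fix x y assume x: "x \<in> univ V" and y: "y \<in> univ V" and e: "\<alpha> x = \<alpha> y"
    obtain k where k: "set [x, y] \<subseteq> gen \<sigma> V (XX k)" using coverg[of "[x,y]"] x y by auto
    then have "PP k x = PP k y" using agree e by auto
    then show "x = y" using good_D(8)[OF gk[of k]] k by (auto dest: inj_onD)
  qed
  have refl: "\<forall>R. \<forall>xs\<in>tuples (univ V) (rar \<sigma> R). rel V R (map \<alpha> xs) \<longrightarrow> rel V R xs"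
  proof (intro allI ballI impI)
    fix R xs assume xs: "xs \<in> tuples (univ V) (rar \<sigma> R)" and r: "rel V R (map \<alpha> xs)"
    obtain k where k: "set xs \<subseteq> gen \<sigma> V (XX k)" using coverg[of xs] xs by auto
    have "rel V R (map (PP k) xs)" using r mapa[OF k] by metis
    then show "rel V R xs" using good_rel[where R=R, OF gk[of k] _ k] xs by auto
  qed
  have surj: "\<alpha> ` univ V = univ V"
  proof
    show "\<alpha> ` univ V \<subseteq> univ V" using aV by auto
  next
    show "univ V \<subseteq> \<alpha> ` univ V"
    proof
      fix w assume w: "w \<in> univ V"
      let ?j = "Suc (idx w)"
      have "w \<in> YY ?j" using stp[of "idx w"] idx[OF w] by auto
      then have "w \<in> gen \<sigma> V (YY ?j)" using gen_props(2)[OF sV good_D(4)[OF gk[of ?j]]] by blast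
      then obtain x where x: "x \<in> gen \<sigma> V (XX ?j)" "w = PP ?j x" using good_D(7)[OF gk[of ?j]] by blast
      then have "\<alpha> x = w" using agree by auto
      moreover have "x \<in> univ V" using x good_D(9)[OF gk] by auto
      ultimately show "w \<in> \<alpha> ` univ V" by blast
    qed
  qed
  have "\<alpha> \<in> Aut \<sigma> V" unfolding Aut_def iso_def emb_def using hom inj refl surj by auto
  moreover have "\<forall>x\<in>gen \<sigma> V X0. \<alpha> x = p0 x"
    using agree[of _ 0] sq0 unfolding XX_def PP_def by auto
  ultimately show ?thesis by blast
qed

end


definition orb :: "(nat \<Rightarrow> nat) set \<Rightarrow> nat list \<Rightarrow> nat list set" where
  "orb G xs = {map g xs | g. g \<in> G}"

lemma olig_orb: "oligomorphic \<Omega> G \<longleftrightarrow> (\<forall>n\<ge>1. finite (orb G ` tuples \<Omega> n))"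
  unfolding oligomorphic_def orb_def by simp

lemma id_Aut: "id \<in> Aut \<sigma> A" unfolding Aut_def by (simp add: iso_id)

lemma self_orb: "xs \<in> orb (Aut \<sigma> A) xs"
  unfolding orb_def by (intro CollectI exI[of _ id]) (simp add: id_Aut)

lemma Aut_comp: "\<alpha> \<in> Aut \<sigma> A \<Longrightarrow> \<beta> \<in> Aut \<sigma> A \<Longrightarrow> \<beta> \<circ> \<alpha> \<in> Aut \<sigma> A"
  unfolding Aut_def using iso_comp by blast

lemma orb_eq:
  assumes sA: "is_struc \<sigma> A" and a: "\<alpha> \<in> Aut \<sigma> A" and sa: "set xs \<subseteq> univ A" and b: "map \<alpha> xs = ys"
  shows "orb (Aut \<sigma> A) ys = orb (Aut \<sigma> A) xs"
proof
  show "orb (Aut \<sigma> A) ys \<subseteq> orb (Aut \<sigma> A) xs"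
  proof
    fix zs assume "zs \<in> orb (Aut \<sigma> A) ys"
    then obtain g where g: "g \<in> Aut \<sigma> A" "zs = map g ys" unfolding orb_def by auto
    then have "zs = map (g \<circ> \<alpha>) xs" using b by auto
    then show "zs \<in> orb (Aut \<sigma> A) xs" using Aut_comp[OF a g(1)] unfolding orb_def by blast
  qed
next
  show "orb (Aut \<sigma> A) xs \<subseteq> orb (Aut \<sigma> A) ys"
  proof
    fix zs assume "zs \<in> orb (Aut \<sigma> A) xs"
    then obtain g where g: "g \<in> Aut \<sigma> A" "zs = map g xs" unfolding orb_def by auto
    let ?ai = "inv_into (univ A) \<alpha>"
    have ai: "?ai \<in> Aut \<sigma> A" using iso_inv[OF sA] a unfolding Aut_def by blast
    have inj: "inj_on \<alpha> (univ A)" using a unfolding Aut_def iso_def emb_def by auto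
    have "map (g \<circ> ?ai) ys = map g xs" unfolding b[symmetric] using inj sa
      by (auto simp: inv_into_f_f subset_iff)
    then have e: "zs = map (g \<circ> ?ai) ys" using g(2) by simp
    have "\<exists>h. zs = map h ys \<and> h \<in> Aut \<sigma> A" using e Aut_comp[OF ai g(1)] by blast
    then show "zs \<in> orb (Aut \<sigma> A) ys" unfolding orb_def by simp
  qed
qed

lemma closed_set_restr[simp]: "closed_set \<sigma> (restr A S) Z = closed_set \<sigma> A Z"
  by (simp add: closed_set_def)

lemma gen_restr_self:
  assumes sA: "is_struc \<sigma> A" and X: "X \<subseteq> univ A"
  shows "gen \<sigma> (restr A (gen \<sigma> A X)) X = gen \<sigma> A X"
proof
  show "gen \<sigma> (restr A (gen \<sigma> A X)) X \<subseteq> gen \<sigma> A X"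
    by (rule gen_least) (use gen_props[OF sA X] in auto)
next
  have sR: "is_struc \<sigma> (restr A (gen \<sigma> A X))" using is_struc_restr gen_props(3)[OF sA X] by blast
  have XR: "X \<subseteq> univ (restr A (gen \<sigma> A X))" using gen_props(2)[OF sA X] by simp
  note gp = gen_props[OF sR XR]
  show "gen \<sigma> A X \<subseteq> gen \<sigma> (restr A (gen \<sigma> A X)) X"
    by (rule gen_least) (use gp gen_props(1)[OF sA X] in auto)
qed

lemma gen_bound:
  assumes sM: "is_struc \<sigma> M" and ol: "oligomorphic (univ M) (Aut \<sigma> M)" and n: "n \<ge> 1"
  shows "\<exists>K. \<forall>c\<in>tuples (univ M) n. card (gen \<sigma> M (set c)) \<le> K"
proof -
  let ?O = "orb (Aut \<sigma> M) ` tuples (univ M) n"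
  have fin: "finite ?O" using ol n unfolding olig_orb by auto
  let ?F = "\<lambda>Ob. card (gen \<sigma> M (set (SOME c. c \<in> Ob)))"
  have "card (gen \<sigma> M (set c)) \<le> Max (?F ` ?O)" if c: "c \<in> tuples (univ M) n" for c
  proof -
    let ?c' = "SOME c'. c' \<in> orb (Aut \<sigma> M) c"
    have "?c' \<in> orb (Aut \<sigma> M) c" using self_orb by (metis someI_ex)
    then obtain g where g: "g \<in> Aut \<sigma> M" "?c' = map g c" unfolding orb_def by auto
    have cM: "set c \<subseteq> univ M" using c by auto
    have hg: "hom \<sigma> M M g" using g(1) unfolding Aut_def iso_def emb_def by auto
    have ig: "inj_on g (univ M)" using g(1) unfolding Aut_def iso_def emb_def by auto
    have "gen \<sigma> M (set ?c') = g ` gen \<sigma> M (set c)" using gen_image[OF sM sM hg cM] g(2) by simp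
    moreover have "inj_on g (gen \<sigma> M (set c))" using inj_on_subset[OF ig gen_props(1)[OF sM cM]] .
    ultimately have "card (gen \<sigma> M (set ?c')) = card (gen \<sigma> M (set c))"
      by (simp add: card_image)
    moreover have "?F (orb (Aut \<sigma> M) c) \<in> ?F ` ?O" using c by blast
    moreover have "finite (?F ` ?O)" using fin by simp
    ultimately show ?thesis using Max_ge by fastforce
  qed
  then show ?thesis by blast
qed

declare map_map[simp del]

lemma trans_iso:
  assumes sA: "is_struc \<sigma> A" and sB: "is_struc \<sigma> B" and ea: "emb \<sigma> A M \<phi>a" and eb: "emb \<sigma> B M \<phi>b"
    and g: "g \<in> Aut \<sigma> M" and len: "length La = length Lb" and sa: "set La = univ A" and sb: "set Lb = univ B"
    and eq: "map \<phi>b Lb = map g (map \<phi>a La)"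
  shows "iso \<sigma> A B (\<lambda>x. inv_into (univ B) \<phi>b (g (\<phi>a x))) \<and>
     (\<forall>i<length La. inv_into (univ B) \<phi>b (g (\<phi>a (La ! i))) = Lb ! i)"
proof -
  define h where "h x = inv_into (univ B) \<phi>b (g (\<phi>a x))" for x
  have injb: "inj_on \<phi>b (univ B)" using eb unfolding emb_def by auto
  have inja: "inj_on \<phi>a (univ A)" using ea unfolding emb_def by auto
  have hga: "hom \<sigma> A M \<phi>a" using ea unfolding emb_def by auto
  have hgb: "hom \<sigma> B M \<phi>b" using eb unfolding emb_def by auto
  have refa: "\<forall>R. \<forall>xs\<in>tuples (univ A) (rar \<sigma> R). rel M R (map \<phi>a xs) \<longrightarrow> rel A R xs"
    using ea unfolding emb_def by auto
  have refb: "\<forall>R. \<forall>xs\<in>tuples (univ B) (rar \<sigma> R). rel M R (map \<phi>b xs) \<longrightarrow> rel B R xs"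
    using eb unfolding emb_def by auto
  have isog: "iso \<sigma> M M g" using g unfolding Aut_def by auto
  have hg: "hom \<sigma> M M g" and ig: "inj_on g (univ M)"
    and refg: "\<forall>R. \<forall>xs\<in>tuples (univ M) (rar \<sigma> R). rel M R (map g xs) \<longrightarrow> rel M R xs"
    using isog unfolding iso_def emb_def by auto
  have key: "g (\<phi>a (La ! i)) = \<phi>b (Lb ! i)" if "i < length La" for i
    using arg_cong[OF eq, of "\<lambda>l. l ! i"] that len by simp
  have hi: "h (La ! i) = Lb ! i" if "i < length La" for i
  proof -
    have "Lb ! i \<in> univ B" using that len sb nth_mem by fastforce
    then show ?thesis unfolding h_def key[OF that] using injb by (simp add: inv_into_f_f)
  qed
  have hx: "h x \<in> univ B \<and> \<phi>b (h x) = g (\<phi>a x)" if "x \<in> univ A" for x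
  proof -
    have "x \<in> set La" using that sa by simp
    then obtain i where i: "i < length La" "La ! i = x" by (auto simp: in_set_conv_nth)
    have "Lb ! i \<in> univ B" using i len sb nth_mem by fastforce
    then show ?thesis using hi[OF i(1)] key[OF i(1)] i(2) by auto
  qed
  have aM: "\<And>x. x \<in> univ A \<Longrightarrow> \<phi>a x \<in> univ M" using hga unfolding hom_def by auto
  have mt: "map \<phi>b (map h xs) = map g (map \<phi>a xs)" if "set xs \<subseteq> univ A" for xs
    unfolding map_map by (rule map_cong) (use hx that in auto)
  have hom: "hom \<sigma> A B h"
    unfolding hom_def
  proof (intro conjI ballI allI impI)
    fix x assume "x \<in> univ A" then show "h x \<in> univ B" using hx by auto
  next
    fix R xs assume xs: "xs \<in> tuples (univ A) (rar \<sigma> R)" and r: "rel A R xs"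
    have "rel M R (map \<phi>a xs)" using hga xs r unfolding hom_def by auto
    moreover have "map \<phi>a xs \<in> tuples (univ M) (rar \<sigma> R)" using xs aM by auto
    ultimately have "rel M R (map g (map \<phi>a xs))" using hg unfolding hom_def by auto
    then have "rel M R (map \<phi>b (map h xs))" using mt xs by auto
    moreover have "map h xs \<in> tuples (univ B) (rar \<sigma> R)" using xs hx by auto
    ultimately show "rel B R (map h xs)" using refb by auto
  next
    fix f xs assume xs: "xs \<in> tuples (univ A) (far \<sigma> f)"
    have fA: "fn A f xs \<in> univ A" using sA xs unfolding is_struc_def closed_set_def by auto
    have hB: "map h xs \<in> tuples (univ B) (far \<sigma> f)" using xs hx by auto
    have fB: "fn B f (map h xs) \<in> univ B" using sB hB unfolding is_struc_def closed_set_def by auto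
    have "\<phi>b (h (fn A f xs)) = g (\<phi>a (fn A f xs))" using hx fA by auto
    also have "\<dots> = g (fn M f (map \<phi>a xs))" using hga xs unfolding hom_def by auto
    also have "\<dots> = fn M f (map g (map \<phi>a xs))"
    proof -
      have "map \<phi>a xs \<in> tuples (univ M) (far \<sigma> f)" using xs aM by auto
      then show ?thesis using hg unfolding hom_def by blast
    qed
    also have "\<dots> = fn M f (map \<phi>b (map h xs))" using mt xs by auto
    also have "\<dots> = \<phi>b (fn B f (map h xs))" using hgb hB unfolding hom_def by auto
    finally have e: "\<phi>b (h (fn A f xs)) = \<phi>b (fn B f (map h xs))" .
    have "h (fn A f xs) \<in> univ B" using hx[OF fA] by blast
    from inj_onD[OF injb e this fB] show "h (fn A f xs) = fn B f (map h xs)" .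
  qed
  have inj: "inj_on h (univ A)"
  proof (rule inj_onI)
    fix x y assume x: "x \<in> univ A" and y: "y \<in> univ A" and e: "h x = h y"
    have "g (\<phi>a x) = g (\<phi>a y)" using hx[OF x] hx[OF y] e by simp
    from inj_onD[OF ig this aM[OF x] aM[OF y]] have "\<phi>a x = \<phi>a y" .
    from inj_onD[OF inja this x y] show "x = y" .
  qed
  have refl: "\<forall>R. \<forall>xs\<in>tuples (univ A) (rar \<sigma> R). rel B R (map h xs) \<longrightarrow> rel A R xs"
  proof (intro allI ballI impI)
    fix R xs assume xs: "xs \<in> tuples (univ A) (rar \<sigma> R)" and r: "rel B R (map h xs)"
    have hB: "map h xs \<in> tuples (univ B) (rar \<sigma> R)" using xs hx by auto
    have "rel M R (map \<phi>b (map h xs))" using hgb hB r unfolding hom_def by auto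
    then have "rel M R (map g (map \<phi>a xs))" using mt xs by auto
    moreover have "map \<phi>a xs \<in> tuples (univ M) (rar \<sigma> R)" using xs aM by auto
    ultimately have "rel M R (map \<phi>a xs)" using refg by auto
    then show "rel A R xs" using refa xs by auto
  qed
  have surj: "h ` univ A = univ B"
  proof
    show "h ` univ A \<subseteq> univ B" using hx by auto
  next
    show "univ B \<subseteq> h ` univ A"
    proof
      fix y assume "y \<in> univ B"
      then have "y \<in> set Lb" using sb by simp
      then obtain i where i: "i < length Lb" "Lb ! i = y" by (auto simp: in_set_conv_nth)
      then have "h (La ! i) = y" using hi len by auto
      moreover have "La ! i \<in> univ A" using i len sa nth_mem by fastforce
      ultimately show "y \<in> h ` univ A" by blast
    qed
  qed
  show ?thesis using hom inj refl surj hi unfolding iso_def emb_def h_def by auto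
qed

declare map_map[simp]



context setting
begin

lemma main_count:
  assumes sM: "is_struc \<sigma> M" and ag: "age_is \<sigma> M C" and lf: "locally_finite \<sigma> M"
    and olM: "oligomorphic (univ M) (Aut \<sigma> M)" and olT: "oligomorphic (univ T) (Aut \<sigma> T)"
    and n: "n \<ge> 1"
  shows "finite (orb (Aut \<sigma> V) ` tuples (univ V) n)"
proof -
  obtain K where K: "\<forall>c\<in>tuples (univ M) n. card (gen \<sigma> M (set c)) \<le> K"
    using gen_bound[OF sM olM n] by blast
  have cV: "cbar \<sigma> C V" using UH unfolding universal_hom_def by auto
  have exphi: "\<exists>\<phi>. emb \<sigma> (gen_sub \<sigma> V (set a)) M \<phi>" if a: "set a \<subseteq> univ V" for a
  proof -
    have "in_cls \<sigma> C (gen_sub \<sigma> V (set a))" using cV a unfolding cbar_def by auto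
    then obtain D h where D: "D \<in> C" "iso \<sigma> (gen_sub \<sigma> V (set a)) D h"
      unfolding in_cls_def isomorphic_def by blast
    obtain e where "emb \<sigma> D M e" using ag D(1) unfolding age_is_def by blast
    then show ?thesis using emb_comp[of \<sigma> _ D h M e] D(2) unfolding iso_def by blast
  qed
  define G where "G a = gen \<sigma> V (set a)" for a
  define Lof where "Lof a = a @ sorted_list_of_set (G a)" for a
  have sR: "is_struc \<sigma> (restr V (G a))" if "set a \<subseteq> univ V" for a
    unfolding G_def using is_struc_restr gen_props(3)[OF sV that] by blast
  have Gfin: "finite (G a) \<and> card (G a) \<le> K" if a: "a \<in> tuples (univ V) n" for a
  proof -
    have aV: "set a \<subseteq> univ V" using a by auto
    obtain \<phi> where phi: "emb \<sigma> (restr V (G a)) M \<phi>" using exphi[OF aV] unfolding G_def gen_sub_def by blast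
    have hp: "hom \<sigma> (restr V (G a)) M \<phi>" and ip: "inj_on \<phi> (G a)" using phi unfolding emb_def by auto
    have aG: "set a \<subseteq> univ (restr V (G a))" using gen_props(2)[OF sV aV] unfolding G_def by simp
    have "\<phi> ` gen \<sigma> (restr V (G a)) (set a) = gen \<sigma> M (\<phi> ` set a)"
      using gen_image[OF sR[OF aV] sM hp aG] .
    then have im: "\<phi> ` G a = gen \<sigma> M (set (map \<phi> a))"
      using gen_restr_self[OF sV aV] unfolding G_def by simp
    have mM: "map \<phi> a \<in> tuples (univ M) n" using a hp aG unfolding hom_def by auto
    have "finite (gen \<sigma> M (set (map \<phi> a)))" using lf mM unfolding locally_finite_def by auto
    then have fin: "finite (G a)" using im ip finite_image_iff by metis
    have "card (G a) = card (\<phi> ` G a)" using ip by (simp add: card_image)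
    moreover have "card (gen \<sigma> M (set (map \<phi> a))) \<le> K" using K mM by blast
    ultimately show ?thesis using fin im by simp
  qed
  have setL: "set (Lof a) = G a" if a: "a \<in> tuples (univ V) n" for a
  proof -
    have "set a \<subseteq> G a" using gen_props(2)[of \<sigma> V "set a"] sV a unfolding G_def by auto
    then show ?thesis using Gfin[OF a] unfolding Lof_def by auto
  qed
  have lenL: "length (Lof a) = n + card (G a)" if a: "a \<in> tuples (univ V) n" for a
    using Gfin[OF a] a unfolding Lof_def by simp
  define P where "P a t \<longleftrightarrow> (\<exists>\<phi>. emb \<sigma> (gen_sub \<sigma> V (set a)) M \<phi> \<and> fst t = length (Lof a) \<and>
      fst (snd t) = orb (Aut \<sigma> M) (map \<phi> (Lof a)) \<and> snd (snd t) = orb (Aut \<sigma> T) (map u (Lof a)))"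
    for a t
  define S where "S = (\<Union>m\<in>{n..n+K}. {m} \<times> (orb (Aut \<sigma> M) ` tuples (univ M) m) \<times> (orb (Aut \<sigma> T) ` tuples (univ T) m))"
  have finS: "finite S"
    unfolding S_def
  proof (rule finite_UN_I)
    show "finite {n..n+K}" by simp
  next
    fix m assume m: "m \<in> {n..n+K}"
    then have "m \<ge> 1" using n by auto
    then show "finite ({m} \<times> (orb (Aut \<sigma> M) ` tuples (univ M) m) \<times> (orb (Aut \<sigma> T) ` tuples (univ T) m))"
      using olM olT unfolding olig_orb by auto
  qed
  have exS: "\<exists>t\<in>S. P a t" if a: "a \<in> tuples (univ V) n" for a
  proof -
    have aV: "set a \<subseteq> univ V" using a by auto
    obtain \<phi> where phi: "emb \<sigma> (gen_sub \<sigma> V (set a)) M \<phi>" using exphi[OF aV] by blast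
    have hp: "\<forall>x\<in>G a. \<phi> x \<in> univ M" using phi unfolding emb_def hom_def gen_sub_def G_def by auto
    have GV: "G a \<subseteq> univ V" using gen_props(1)[OF sV aV] unfolding G_def .
    let ?t = "(length (Lof a), orb (Aut \<sigma> M) (map \<phi> (Lof a)), orb (Aut \<sigma> T) (map u (Lof a)))"
    have "map \<phi> (Lof a) \<in> tuples (univ M) (length (Lof a))" using hp setL[OF a] by auto
    moreover have "map u (Lof a) \<in> tuples (univ T) (length (Lof a))" using uV setL[OF a] GV by auto
    moreover have "length (Lof a) \<in> {n..n+K}" using lenL[OF a] Gfin[OF a] by auto
    ultimately have "?t \<in> S" unfolding S_def by blast
    moreover have "P a ?t" unfolding P_def using phi by auto
    ultimately show ?thesis by blast
  qed
  have key: "orb (Aut \<sigma> V) b = orb (Aut \<sigma> V) a"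
    if a: "a \<in> tuples (univ V) n" and b: "b \<in> tuples (univ V) n" and Pa: "P a t" and Pb: "P b t" for a b t
  proof -
    obtain \<phi>a where pa: "emb \<sigma> (gen_sub \<sigma> V (set a)) M \<phi>a" "fst t = length (Lof a)"
      "fst (snd t) = orb (Aut \<sigma> M) (map \<phi>a (Lof a))" "snd (snd t) = orb (Aut \<sigma> T) (map u (Lof a))"
      using Pa unfolding P_def by blast
    obtain \<phi>b where pb: "emb \<sigma> (gen_sub \<sigma> V (set b)) M \<phi>b" "fst t = length (Lof b)"
      "fst (snd t) = orb (Aut \<sigma> M) (map \<phi>b (Lof b))" "snd (snd t) = orb (Aut \<sigma> T) (map u (Lof b))"
      using Pb unfolding P_def by blast
    have aV: "set a \<subseteq> univ V" and bV: "set b \<subseteq> univ V" using a b by auto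
    have len: "length (Lof a) = length (Lof b)" using pa(2) pb(2) by simp
    have "map \<phi>b (Lof b) \<in> orb (Aut \<sigma> M) (map \<phi>a (Lof a))" using pa(3) pb(3) self_orb by metis
    then obtain g where g: "g \<in> Aut \<sigma> M" "map \<phi>b (Lof b) = map g (map \<phi>a (Lof a))"
      unfolding orb_def by blast
    have "map u (Lof b) \<in> orb (Aut \<sigma> T) (map u (Lof a))" using pa(4) pb(4) self_orb by metis
    then obtain \<beta> where bt: "\<beta> \<in> Aut \<sigma> T" "map u (Lof b) = map \<beta> (map u (Lof a))"
      unfolding orb_def by blast
    let ?h = "\<lambda>x. inv_into (univ (restr V (G b))) \<phi>b (g (\<phi>a x))"
    have ti: "iso \<sigma> (restr V (G a)) (restr V (G b)) ?h \<and> (\<forall>i<length (Lof a). ?h (Lof a ! i) = Lof b ! i)"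
      apply (rule trans_iso[OF sR[OF aV] sR[OF bV] _ _ g(1) len _ _ g(2)])
      using pa(1) pb(1) setL[OF a] setL[OF b] unfolding gen_sub_def G_def by auto
    have tw: "\<forall>x\<in>gen \<sigma> V (set a). u (?h x) = \<beta> (u x)"
    proof
      fix x assume "x \<in> gen \<sigma> V (set a)"
      then have "x \<in> set (Lof a)" using setL[OF a] unfolding G_def by simp
      then obtain i where i: "i < length (Lof a)" "Lof a ! i = x" by (auto simp: in_set_conv_nth)
      have "u (?h x) = u (Lof b ! i)" using ti i by auto
      also have "\<dots> = map u (Lof b) ! i" using i len by simp
      also have "\<dots> = \<beta> (u x)" using bt(2) i by simp
      finally show "u (?h x) = \<beta> (u x)" .
    qed
    have "good \<beta> (set a) (set b) ?h"
      unfolding good_def gen_sub_def using aV bV ti tw unfolding G_def by auto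
    then obtain \<alpha> where al: "\<alpha> \<in> Aut \<sigma> V" "\<forall>x\<in>gen \<sigma> V (set a). \<alpha> x = ?h x"
      using lift[OF bt(1)] by blast
    have "map \<alpha> a = b"
    proof (rule nth_equalityI)
      show "length (map \<alpha> a) = length b" using a b by simp
    next
      fix i assume "i < length (map \<alpha> a)"
      then have i: "i < length a" by simp
      have la: "Lof a ! i = a ! i" using i unfolding Lof_def by (simp add: nth_append)
      have lb: "Lof b ! i = b ! i" using i a b unfolding Lof_def by (simp add: nth_append)
      have ai: "a ! i \<in> gen \<sigma> V (set a)" using gen_props(2)[OF sV aV] i nth_mem by blast
      have il: "i < length (Lof a)" using i unfolding Lof_def by simp
      have "\<alpha> (a ! i) = ?h (Lof a ! i)" using al(2) ai la by simp
      also have "\<dots> = b ! i" using ti il lb by simp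
      finally show "map \<alpha> a ! i = b ! i" using i by simp
    qed
    then show ?thesis using orb_eq[OF sV al(1) aV] by simp
  qed
  define F where "F t = orb (Aut \<sigma> V) (SOME a. a \<in> tuples (univ V) n \<and> P a t)" for t
  have "orb (Aut \<sigma> V) ` tuples (univ V) n \<subseteq> F ` S"
  proof
    fix O' assume "O' \<in> orb (Aut \<sigma> V) ` tuples (univ V) n"
    then obtain a where a: "a \<in> tuples (univ V) n" "O' = orb (Aut \<sigma> V) a" by blast
    obtain t where t: "t \<in> S" "P a t" using exS[OF a(1)] by blast
    let ?b = "SOME a. a \<in> tuples (univ V) n \<and> P a t"
    have "?b \<in> tuples (univ V) n \<and> P ?b t" using a(1) t(2) by (metis (mono_tags, lifting) someI_ex)
    then have "F t = O'" unfolding F_def using key[OF _ a(1) _ t(2)] a(2) by blast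
    then show "O' \<in> F ` S" using t(1) by blast
  qed
  then show ?thesis using finS finite_subset by blast
qed

end

theorem proposition3p6:
  fixes \<sigma> :: "('r, 'f) signature"
    and U C :: "('r, 'f) struc set"
    and V T :: "('r, 'f) struc"
    and u :: "nat \<Rightarrow> nat"
  assumes "age_class \<sigma> U"
    and "fraisse_class \<sigma> C"
    and "\<forall>A\<in>C. in_cls \<sigma> U A"
    and "\<exists>M. fraisse_limit \<sigma> C M \<and> locally_finite \<sigma> M \<and> oligomorphic (univ M) (Aut \<sigma> M)"
    and "cbar \<sigma> U T"
    and "universal_hom \<sigma> C V T u"
    and "homogeneous_hom \<sigma> V T u"
    and "oligomorphic (univ T) (Aut \<sigma> T)"
  shows "oligomorphic (univ V) (Aut \<sigma> V)"
proof -
  obtain M where M: "fraisse_limit \<sigma> C M" "locally_finite \<sigma> M" "oligomorphic (univ M) (Aut \<sigma> M)"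
    using assms(4) by blast
  interpret setting \<sigma> C V T u using assms(6,7) by unfold_locales
  have sM: "is_struc \<sigma> M" and ag: "age_is \<sigma> M C" using M(1) unfolding fraisse_limit_def by auto
  show ?thesis unfolding olig_orb
    using main_count[OF sM ag M(2) M(3) assms(8)] by blast
qed


end
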